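(* If the finite symmetric two-player game $(X,\pi)$ has no finite population evolutionary stable strategy (fESS), then imitation is subject to a money pump.
   Context: A symmetric two-player game $(X,\pi)$ has common action set $X$ and payoff $\pi:X\times X\to\mathbb{R}$ ($\pi(x,y)$ = payoff of the player choosing $x$ against $y$). An action $x^*\in X$ is a fESS if $\pi(x^*,x)\ge\pi(x,x^* )$ for all $x\in X$. Relative payoff: $\Delta(x,y)=\pi(x,y)-\pi(y,x)$. Imitate-the-best: given initial $y_0\in X$ and any opponent sequence $(x_t)_{t\ge0}$, $y_t=x_{t-1}$ if $\Delta(x_{t-1},y_{t-1})>0$ and $y_t=y_{t-1}$ otherwise. Imitation is not subject to a money pump if there is $M\in\mathbb{R}_+$ such that for every $y_0\in X$ and every sequence $(x_t)$, $\limsup_{T\to\infty}\sum_{t=0}^T\Delta(x_t,y_t)\le M$; otherwise it is subject to a money pump. *)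

theory Defs
  imports "HOL-Analysis.Analysis"
begin

definition is_fESS :: "'a set \<Rightarrow> ('a \<Rightarrow> 'a \<Rightarrow> real) \<Rightarrow> 'a \<Rightarrow> bool" where
  "is_fESS X \<pi> xs \<longleftrightarrow> xs \<in> X \<and> (\<forall>x\<in>X. \<pi> xs x \<ge> \<pi> x xs)"

definition rel_payoff :: "('a \<Rightarrow> 'a \<Rightarrow> real) \<Rightarrow> 'a \<Rightarrow> 'a \<Rightarrow> real" where
  "rel_payoff \<pi> x y = \<pi> x y - \<pi> y x"

primrec imitate :: "('a \<Rightarrow> 'a \<Rightarrow> real) \<Rightarrow> 'a \<Rightarrow> (nat \<Rightarrow> 'a) \<Rightarrow> nat \<Rightarrow> 'a" where
  "imitate \<pi> y0 xs 0 = y0"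
| "imitate \<pi> y0 xs (Suc t) =
     (if rel_payoff \<pi> (xs t) (imitate \<pi> y0 xs t) > 0 then xs t else imitate \<pi> y0 xs t)"

definition no_money_pump :: "'a set \<Rightarrow> ('a \<Rightarrow> 'a \<Rightarrow> real) \<Rightarrow> bool" where
  "no_money_pump X \<pi> \<longleftrightarrow> (\<exists>M::real. M \<ge> 0 \<and>
     (\<forall>y0\<in>X. \<forall>xs. (\<forall>t. xs t \<in> X) \<longrightarrow>
        limsup (\<lambda>T. ereal (\<Sum>t\<le>T. rel_payoff \<pi> (xs t) (imitate \<pi> y0 xs t))) \<le> ereal M))"

definition money_pump :: "'a set \<Rightarrow> ('a \<Rightarrow> 'a \<Rightarrow> real) \<Rightarrow> bool" where
  "money_pump X \<pi> \<longleftrightarrow> \<not> no_money_pump X \<pi>"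

end

theory Submission
  imports Defs
begin

theorem corollary1:
  fixes X :: "'a set" and \<pi> :: "'a \<Rightarrow> 'a \<Rightarrow> real"
  assumes "finite X" and "X \<noteq> {}"
    and "\<not> (\<exists>x\<in>X. is_fESS X \<pi> x)"
  shows "money_pump X \<pi>"
proof -
  have "\<forall>x\<in>X. \<exists>y\<in>X. rel_payoff \<pi> y x > 0"
    using assms(3) unfolding is_fESS_def rel_payoff_def by (auto simp: not_le)
  then obtain f where f: "\<And>x. x \<in> X \<Longrightarrow> f x \<in> X \<and> rel_payoff \<pi> (f x) x > 0"
    by metis
  define \<delta> where "\<delta> = Min ((\<lambda>x. rel_payoff \<pi> (f x) x) ` X)"
  have dpos: "\<delta> > 0" unfolding \<delta>_def using assms(1,2) f by (subst Min_gr_iff) auto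
  have dle: "\<And>x. x \<in> X \<Longrightarrow> \<delta> \<le> rel_payoff \<pi> (f x) x"
    unfolding \<delta>_def using assms(1) by auto
  obtain y0 where y0: "y0 \<in> X" using assms(2) by auto
  define z where "z = rec_nat y0 (\<lambda>_ y. f y)"
  have z0: "z 0 = y0" and zS: "\<And>t. z (Suc t) = f (z t)" by (simp_all add: z_def)
  have zX: "z t \<in> X" for t by (induction t) (use y0 f in \<open>auto simp: z0 zS\<close>)
  define xs where "xs t = f (z t)" for t
  have xsX: "\<forall>t. xs t \<in> X" using f zX by (simp add: xs_def)
  have im: "imitate \<pi> y0 xs t = z t" for t
    by (induction t) (use f zX in \<open>auto simp: z0 zS xs_def\<close>)
  have sum_ge: "real (Suc T) * \<delta> \<le> (\<Sum>t\<le>T. rel_payoff \<pi> (xs t) (imitate \<pi> y0 xs t))" for T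
  proof -
    have "(\<Sum>t\<le>T. \<delta>) \<le> (\<Sum>t\<le>T. rel_payoff \<pi> (xs t) (imitate \<pi> y0 xs t))"
      by (rule sum_mono) (simp add: im xs_def dle zX)
    thus ?thesis by simp
  qed
  show ?thesis unfolding money_pump_def no_money_pump_def
  proof
    assume "\<exists>M::real. M \<ge> 0 \<and> (\<forall>y0\<in>X. \<forall>xs. (\<forall>t. xs t \<in> X) \<longrightarrow>
        limsup (\<lambda>T. ereal (\<Sum>t\<le>T. rel_payoff \<pi> (xs t) (imitate \<pi> y0 xs t))) \<le> ereal M)"
    then obtain M where M: "limsup (\<lambda>T. ereal (\<Sum>t\<le>T. rel_payoff \<pi> (xs t) (imitate \<pi> y0 xs t))) \<le> ereal M"
      using y0 xsX by blast
    define N where "N = nat \<lceil>(M+1)/\<delta>\<rceil>"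
    have ev: "eventually (\<lambda>T. ereal (M+1) \<le> ereal (\<Sum>t\<le>T. rel_payoff \<pi> (xs t) (imitate \<pi> y0 xs t))) sequentially"
    proof (rule eventually_sequentiallyI[of N])
      fix T assume "N \<le> T"
      have "(M+1)/\<delta> \<le> real N" unfolding N_def by linarith
      also have "\<dots> \<le> real (Suc T)" using \<open>N \<le> T\<close> by simp
      finally have "M + 1 \<le> real (Suc T) * \<delta>" using dpos by (simp add: divide_le_eq)
      thus "ereal (M+1) \<le> ereal (\<Sum>t\<le>T. rel_payoff \<pi> (xs t) (imitate \<pi> y0 xs t))"
        using sum_ge[of T] by simp
    qed
    have "ereal (M+1) \<le> limsup (\<lambda>T. ereal (\<Sum>t\<le>T. rel_payoff \<pi> (xs t) (imitate \<pi> y0 xs t)))"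
      by (rule le_Limsup[OF _ ev]) simp
    with M have "ereal (M+1) \<le> ereal M" by (rule order_trans[rotated])
    thus False by simp
  qed
qed

end
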